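(* Let $n\ge 2$. If a nontrivial periodic braid $X\in B_n$ is given as a word of length $l$ in the generators $\sigma_1,\ldots,\sigma_{n-1}$ and their inverses, then $l\ge n-1$.
   Context: $B_n$ is Artin's braid group with generators $\sigma_1,\ldots,\sigma_{n-1}$ and relations $\sigma_i\sigma_j=\sigma_j\sigma_i$ ($|i-j|>1$), $\sigma_i\sigma_j\sigma_i=\sigma_j\sigma_i\sigma_j$ ($|i-j|=1$). $\Delta^2$, the square of $\Delta=\sigma_1(\sigma_2\sigma_1)\cdots(\sigma_{n-1}\cdots\sigma_1)$, generates the center. A braid is periodic if some nonzero power of it is a power of $\Delta^2$. *)

theory Defs
  imports Main
begin

text \<open>Braid words: a letter (i, True) stands for sigma_i, (i, False) for sigma_i inverse.\<close>

type_synonym bletter = "nat \<times> bool"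
type_synonym bword = "bletter list"

definition valid_word :: "nat \<Rightarrow> bword \<Rightarrow> bool" where
  "valid_word n w \<longleftrightarrow> (\<forall>(i, b) \<in> set w. 1 \<le> i \<and> i \<le> n - 1)"

definition inv_word :: "bword \<Rightarrow> bword" where
  "inv_word w = rev (map (\<lambda>(i, b). (i, \<not> b)) w)"

inductive braid_eq :: "nat \<Rightarrow> bword \<Rightarrow> bword \<Rightarrow> bool" for n where
  cancel: "\<lbrakk>1 \<le> i; i \<le> n - 1\<rbrakk> \<Longrightarrow> braid_eq n [(i, b), (i, \<not> b)] []"
| comm: "\<lbrakk>1 \<le> i; i \<le> n - 1; 1 \<le> j; j \<le> n - 1; i + 1 < j \<or> j + 1 < i\<rbrakk>
     \<Longrightarrow> braid_eq n [(i, True), (j, True)] [(j, True), (i, True)]"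
| braid: "\<lbrakk>1 \<le> i; i \<le> n - 1; 1 \<le> j; j \<le> n - 1; i + 1 = j \<or> j + 1 = i\<rbrakk>
     \<Longrightarrow> braid_eq n [(i, True), (j, True), (i, True)] [(j, True), (i, True), (j, True)]"
| refl: "braid_eq n w w"
| sym: "braid_eq n u v \<Longrightarrow> braid_eq n v u"
| trans: "braid_eq n u v \<Longrightarrow> braid_eq n v w \<Longrightarrow> braid_eq n u w"
| ctxt: "braid_eq n u v \<Longrightarrow> braid_eq n (x @ u @ y) (x @ v @ y)"

definition word_pow :: "bword \<Rightarrow> int \<Rightarrow> bword" where
  "word_pow w k = (if 0 \<le> k then concat (replicate (nat k) w)
                   else concat (replicate (nat (- k)) (inv_word w)))"

definition Delta_word :: "nat \<Rightarrow> bword" where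
  "Delta_word n = concat (map (\<lambda>i. map (\<lambda>j. (j, True)) (rev [1..<i+1])) [1..<n])"

definition periodic_braid :: "nat \<Rightarrow> bword \<Rightarrow> bool" where
  "periodic_braid n w \<longleftrightarrow>
     (\<exists>k::int. \<exists>m::int. k \<noteq> 0 \<and> braid_eq n (word_pow w k) (word_pow (Delta_word n) (2 * m)))"

end

theory Submission
  imports Defs
begin


definition adj :: "nat \<Rightarrow> nat \<Rightarrow> bool" where "adj i j \<longleftrightarrow> i + 1 = j \<or> j + 1 = i"
definition far :: "nat \<Rightarrow> nat \<Rightarrow> bool" where "far i j \<longleftrightarrow> i \<noteq> j \<and> \<not> adj i j"

definition brel :: "nat list \<Rightarrow> nat list \<Rightarrow> bool" where
  "brel a b \<longleftrightarrow> (\<exists>i j. (far i j \<and> a = [i,j] \<and> b = [j,i]) \<or> (adj i j \<and> a = [i,j,i] \<and> b = [j,i,j]))"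

definition pstep :: "nat list \<Rightarrow> nat list \<Rightarrow> bool" where
  "pstep u v \<longleftrightarrow> (\<exists>x y a b. u = x @ a @ y \<and> v = x @ b @ y \<and> brel a b)"

abbreviation peq :: "nat list \<Rightarrow> nat list \<Rightarrow> bool" where "peq \<equiv> pstep\<^sup>*\<^sup>*"

lemma far_sym: "far i j \<Longrightarrow> far j i" by (auto simp: far_def adj_def)
lemma adj_sym: "adj i j \<Longrightarrow> adj j i" by (auto simp: adj_def)

lemma brel_sym: "brel a b \<Longrightarrow> brel b a"
  unfolding brel_def using far_sym adj_sym by blast

lemma pstep_sym: "pstep u v \<Longrightarrow> pstep v u"
  unfolding pstep_def using brel_sym by blast

lemma peq_sym: "peq u v \<Longrightarrow> peq v u"
  by (induction rule: rtranclp_induct) (auto intro: converse_rtranclp_into_rtranclp pstep_sym)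

lemma peq_trans: "peq u v \<Longrightarrow> peq v w \<Longrightarrow> peq u w" by (rule rtranclp_trans)

lemma pstep_ctxt: "pstep u v \<Longrightarrow> pstep (x @ u @ y) (x @ v @ y)"
  unfolding pstep_def by (metis append.assoc)

lemma peq_ctxt: "peq u v \<Longrightarrow> peq (x @ u @ y) (x @ v @ y)"
  by (induction rule: rtranclp_induct) (auto intro: rtranclp.rtrancl_into_rtrancl pstep_ctxt)

lemma peq_app: "peq a b \<Longrightarrow> peq c d \<Longrightarrow> peq (a @ c) (b @ d)"
proof -
  assume "peq a b" "peq c d"
  then have "peq (a @ c) (b @ c)" using peq_ctxt[of a b "[]" c] by simp
  moreover have "peq (b @ c) (b @ d)" using peq_ctxt[OF \<open>peq c d\<close>, of b "[]"] by simp
  ultimately show ?thesis by (rule rtranclp_trans)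
qed

lemma peq_Cons: "peq u v \<Longrightarrow> peq (a # u) (a # v)"
  using peq_ctxt[of u v "[a]" "[]"] by simp

lemma peq_appL: "peq u v \<Longrightarrow> peq (x @ u) (x @ v)"
  using peq_ctxt[of u v x "[]"] by simp
lemma peq_appR: "peq u v \<Longrightarrow> peq (u @ y) (v @ y)"
  using peq_ctxt[of u v "[]" y] by simp

lemma brel_length: "brel a b \<Longrightarrow> length a = length b" unfolding brel_def by auto
lemma brel_set: "brel a b \<Longrightarrow> set a = set b" unfolding brel_def by auto

lemma pstep_length: "pstep u v \<Longrightarrow> length u = length v"
  unfolding pstep_def by (auto dest: brel_length)
lemma pstep_set: "pstep u v \<Longrightarrow> set u = set v"
proof -
  assume "pstep u v"
  then obtain x y a b where "u = x @ a @ y" "v = x @ b @ y" "brel a b" unfolding pstep_def by blast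
  then show ?thesis using brel_set[of a b] by simp
qed

lemma peq_length: "peq u v \<Longrightarrow> length u = length v"
  by (induction rule: rtranclp_induct) (auto dest: pstep_length)

lemma peq_set: "peq u v \<Longrightarrow> set u = set v"
  by (induction rule: rtranclp_induct) (auto dest: pstep_set)

lemma sw: "far a b \<Longrightarrow> peq (x @ a # b # y) (x @ b # a # y)"
proof -
  assume "far a b"
  then have "pstep (x @ [a,b] @ y) (x @ [b,a] @ y)" unfolding pstep_def brel_def by blast
  then show ?thesis by simp
qed

lemma br: "adj a b \<Longrightarrow> peq (x @ a # b # a # y) (x @ b # a # b # y)"
proof -
  assume "adj a b"
  then have "pstep (x @ [a,b,a] @ y) (x @ [b,a,b] @ y)" unfolding pstep_def brel_def by blast
  then show ?thesis by simp
qed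

lemma sw0: "far a b \<Longrightarrow> peq (a # b # y) (b # a # y)" using sw[of a b "[]"] by simp
lemma br0: "adj a b \<Longrightarrow> peq (a # b # a # y) (b # a # b # y)" using br[of a b "[]"] by simp

lemma commute_far: "(\<forall>x\<in>set a. far r x) \<Longrightarrow> peq (r # a @ w) (a @ r # w)"
proof (induction a)
  case Nil then show ?case by simp
next
  case (Cons c a)
  have "peq (r # c # a @ w) (c # r # a @ w)" using Cons.prems sw0 by simp
  also have "peq (c # r # a @ w) (c # a @ r # w)" using Cons by (auto intro: peq_Cons)
  finally show ?case by simp
qed

definition al :: "nat \<Rightarrow> nat \<Rightarrow> nat list" where
  "al i j = (if i = j then [] else if adj i j then [j, i] else [j])"

definition GL :: "nat \<Rightarrow> bool" where
  "GL L \<longleftrightarrow> (\<forall>i j u v. length u = L \<longrightarrow> peq (i # u) (j # v) \<longrightarrow>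
      (\<exists>z. peq u (al i j @ z) \<and> peq v (al j i @ z)))"

lemma single: "pstep (i # u) (r # t) \<Longrightarrow> \<exists>z. peq u (al i r @ z) \<and> peq t (al r i @ z)"
proof -
  assume "pstep (i # u) (r # t)"
  then obtain x y a b where e: "i # u = x @ a @ y" "r # t = x @ b @ y" and b: "brel a b"
    unfolding pstep_def by blast
  show ?thesis
  proof (cases x)
    case Nil
    from b obtain p q where "(far p q \<and> a = [p,q] \<and> b = [q,p]) \<or> (adj p q \<and> a = [p,q,p] \<and> b = [q,p,q])"
      unfolding brel_def by blast
    then show ?thesis
    proof
      assume h: "far p q \<and> a = [p,q] \<and> b = [q,p]"
      then have "i = p" "u = q # y" "r = q" "t = p # y" using e Nil by auto
      moreover have "al p q = [q]" "al q p = [p]" using h far_sym[of p q] by (auto simp: al_def far_def)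
      ultimately show ?thesis by auto
    next
      assume h: "adj p q \<and> a = [p,q,p] \<and> b = [q,p,q]"
      then have "i = p" "u = q # p # y" "r = q" "t = p # q # y" using e Nil by auto
      moreover have "al p q = [q,p]" "al q p = [p,q]" using h adj_sym[of p q] by (auto simp: al_def adj_def)
      ultimately show ?thesis by auto
    qed
  next
    case (Cons c x')
    then have "i = c" "r = c" "u = x' @ a @ y" "t = x' @ b @ y" using e by auto
    then have "pstep u t" "i = r" using b unfolding pstep_def by blast+
    then show ?thesis by (auto simp: al_def)
  qed
qed



lemma dec: assumes IH: "\<forall>L'<L. GL L'" and "peq (a # p) (b # q)" and "length p < L"
  shows "\<exists>z. peq p (al a b @ z) \<and> peq q (al b a @ z)"
  using assms unfolding GL_def by blast

lemma canc1: assumes IH: "\<forall>L'<L. GL L'" and "peq (a # p) (a # q)" and "length p < L"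
  shows "peq p q"
proof -
  obtain z where "peq p z" "peq q z" using dec[OF assms] by (auto simp: al_def)
  then show ?thesis using peq_sym peq_trans by blast
qed

lemma cancp: assumes IH: "\<forall>L'<L. GL L'"
  shows "peq (p @ x) (p @ y) \<Longrightarrow> length (p @ x) \<le> L \<Longrightarrow> peq x y"
proof (induction p)
  case Nil then show ?case by simp
next
  case (Cons a p)
  then have "peq (p @ x) (p @ y)" using canc1[OF IH, of a "p @ x" "p @ y"] by simp
  then show ?case using Cons by simp
qed

lemma far_al: "far i j \<Longrightarrow> al i j = [j]" by (auto simp: al_def far_def)
lemma adj_al: "adj i j \<Longrightarrow> al i j = [j, i]" by (auto simp: al_def adj_def)

lemma comb_a: assumes IH: "\<forall>L'<L. GL L'" and lt: "length t = L"
  and fir: "far i r" and frj: "far r j"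
  and h1: "peq u (r # z1)" and h2: "peq t (i # z1)" and h3: "peq t (j # z2)" and h4: "peq v (r # z2)"
  shows "\<exists>z. peq u (al i j @ z) \<and> peq v (al j i @ z)"
proof -
  have "peq (i # z1) (j # z2)" using h2 h3 peq_sym peq_trans by blast
  moreover have "length z1 < L" using peq_length[OF h2] lt by simp
  ultimately obtain w where w: "peq z1 (al i j @ w)" "peq z2 (al j i @ w)" using dec[OF IH] by blast
  have s1: "\<forall>x\<in>set (al i j). far r x" using fir frj far_sym by (auto simp: al_def)
  have s2: "\<forall>x\<in>set (al j i). far r x" using fir frj far_sym by (auto simp: al_def)
  have "peq u (r # al i j @ w)" using h1 w(1) peq_Cons peq_trans by blast
  also have "peq (r # al i j @ w) (al i j @ r # w)" by (rule commute_far[OF s1])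
  finally have A: "peq u (al i j @ r # w)" .
  have "peq v (r # al j i @ w)" using h4 w(2) peq_Cons peq_trans by blast
  also have "peq (r # al j i @ w) (al j i @ r # w)" by (rule commute_far[OF s2])
  finally have B: "peq v (al j i @ r # w)" .
  show ?thesis using A B by blast
qed

lemma comb_b: assumes IH: "\<forall>L'<L. GL L'" and lt: "length t = L"
  and fir: "far i r" and arj: "adj r j"
  and h1: "peq u (r # z1)" and h2: "peq t (i # z1)" and h3: "peq t (j # r # z2)" and h4: "peq v (r # j # z2)"
  shows "\<exists>z. peq u (al i j @ z) \<and> peq v (al j i @ z)"
proof -
  have "peq (i # z1) (j # r # z2)" using h2 h3 peq_sym peq_trans by blast
  moreover have "length z1 < L" using peq_length[OF h2] lt by simp
  ultimately obtain w where w: "peq z1 (al i j @ w)" "peq (r # z2) (al j i @ w)" using dec[OF IH] by blast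
  have lz2: "length z2 < L" using peq_length[OF h3] lt by simp
  have ij: "i \<noteq> j" using fir arj by (auto simp: far_def adj_def)
  show ?thesis
  proof (cases "adj i j")
    case False
    then have fij: "far i j" using ij by (simp add: far_def)
    have e1: "al i j = [j]" "al j i = [i]" using fij far_sym far_al by auto
    obtain w' where w': "peq z2 (al r i @ w')" "peq w (al i r @ w')"
      using dec[OF IH, of r z2 i w] w(2) lz2 e1 by auto
    have e2: "al r i = [i]" "al i r = [r]" using fir far_sym far_al by auto
    have "peq u (r # z1)" by (rule h1)
    also have "peq (r # z1) (r # j # w)" using w(1) e1 peq_Cons by simp
    also have "peq (r # j # w) (r # j # r # w')" using w'(2) e2 peq_Cons by simp
    also have "peq (r # j # r # w') (j # r # j # w')" using br0[OF arj] .
    finally have A: "peq u (al i j @ r # j # w')" using e1 by simp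
    have "peq v (r # j # z2)" by (rule h4)
    also have "peq (r # j # z2) (r # j # i # w')" using w'(1) e2 peq_Cons by simp
    also have "peq (r # j # i # w') (r # i # j # w')" using sw[of j i "[r]" w'] fij far_sym by simp
    also have "peq (r # i # j # w') (i # r # j # w')" using sw0[of r i] fir far_sym by simp
    finally have B: "peq v (al j i @ r # j # w')" using e1 by simp
    show ?thesis using A B by blast
  next
    case True
    have e1: "al i j = [j, i]" "al j i = [i, j]" using True adj_sym adj_al by auto
    have e2: "al r i = [i]" "al i r = [r]" using fir far_sym far_al by auto
    obtain w' where w': "peq z2 (i # w')" "peq (j # w) (r # w')"
      using dec[OF IH, of r z2 i "j # w"] w(2) lz2 e1 e2 by auto
    have lw: "length w < L" using peq_length[OF w(1)] \<open>length z1 < L\<close> by simp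
    obtain w'' where w'': "peq w (al j r @ w'')" "peq w' (al r j @ w'')"
      using dec[OF IH, of j w r w'] w'(2) lw by auto
    have e3: "al j r = [r, j]" "al r j = [j, r]" using arj adj_sym adj_al by auto
    have fri: "far r i" using fir far_sym by blast
    have "peq u (r # z1)" by (rule h1)
    also have "peq (r # z1) (r # j # i # w)" using w(1) e1 peq_Cons by simp
    also have "peq (r # j # i # w) (r # j # i # r # j # w'')" using w''(1) e3 peq_Cons by simp
    also have "peq (r # j # i # r # j # w'') (r # j # r # i # j # w'')" using sw[of i r "[r, j]" "j # w''"] fir by simp
    also have "peq (r # j # r # i # j # w'') (j # r # j # i # j # w'')" using br0[OF arj] .
    also have "peq (j # r # j # i # j # w'') (j # r # i # j # i # w'')" using br[of j i "[j, r]" w''] True adj_sym by simp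
    also have "peq (j # r # i # j # i # w'') (j # i # r # j # i # w'')" using sw[of r i "[j]"] fri by simp
    finally have A: "peq u (al i j @ r # j # i # w'')" using e1 by simp
    have "peq v (r # j # z2)" by (rule h4)
    also have "peq (r # j # z2) (r # j # i # w')" using w'(1) peq_Cons by simp
    also have "peq (r # j # i # w') (r # j # i # j # r # w'')" using w''(2) e3 peq_Cons by simp
    also have "peq (r # j # i # j # r # w'') (r # i # j # i # r # w'')" using br[of j i "[r]"] True adj_sym by simp
    also have "peq (r # i # j # i # r # w'') (i # r # j # i # r # w'')" using sw0[OF fri] .
    also have "peq (i # r # j # i # r # w'') (i # r # j # r # i # w'')" using sw[of i r "[i, r, j]"] fir by simp
    also have "peq (i # r # j # r # i # w'') (i # j # r # j # i # w'')" using br[of r j "[i]"] arj by simp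
    finally have B: "peq v (al j i @ r # j # i # w'')" using e1 by simp
    show ?thesis using A B by blast
  qed
qed

lemma comb_d: assumes IH: "\<forall>L'<L. GL L'" and lt: "length t = L"
  and air: "adj i r" and arj: "adj r j" and ij: "i \<noteq> j"
  and h1: "peq u (r # i # z1)" and h2: "peq t (i # r # z1)" and h3: "peq t (j # r # z2)" and h4: "peq v (r # j # z2)"
  shows "\<exists>z. peq u (al i j @ z) \<and> peq v (al j i @ z)"
proof -
  have fij: "far i j" using air arj ij by (auto simp: far_def adj_def)
  have e1: "al i j = [j]" "al j i = [i]" using fij far_sym far_al by auto
  have "peq (i # r # z1) (j # r # z2)" using h2 h3 peq_sym peq_trans by blast
  moreover have "length (r # z1) < L" using peq_length[OF h2] lt by simp
  ultimately obtain w where w: "peq (r # z1) (j # w)" "peq (r # z2) (i # w)" using dec[OF IH, of i "r # z1" j "r # z2"] e1 by auto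
  have l1: "length z1 < L" "length z2 < L" using peq_length[OF h2] peq_length[OF h3] lt by auto
  have e2: "al r j = [j, r]" "al j r = [r, j]" "al r i = [i, r]" "al i r = [r, i]"
    using air arj adj_sym adj_al by auto
  obtain w1 where w1: "peq z1 ([j, r] @ w1)" "peq w ([r, j] @ w1)" using dec[OF IH, of r z1 j w] w(1) l1 e2 by auto
  obtain w2 where w2: "peq z2 ([i, r] @ w2)" "peq w ([r, i] @ w2)" using dec[OF IH, of r z2 i w] w(2) l1 e2 by auto
  have "peq (r # j # w1) (r # i # w2)" using peq_trans[OF peq_sym[OF w1(2)] w2(2)] by simp
  moreover have "length (j # w1) < L" using peq_length[OF w1(1)] l1 by simp
  ultimately have "peq (j # w1) (i # w2)" using canc1[OF IH] by blast
  moreover have "length w1 < L" using peq_length[OF w1(1)] l1 by simp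
  ultimately obtain w3 where w3: "peq w1 (i # w3)" "peq w2 (j # w3)" using dec[OF IH, of j w1 i w2] e1 by auto
  have fji: "far j i" using fij far_sym by blast
  have "peq u (r # i # z1)" by (rule h1)
  also have "peq (r # i # z1) (r # i # j # r # i # w3)"
  proof -
    have "peq z1 (j # r # i # w3)" using w1(1) peq_appL[OF w3(1), of "[j, r]"] peq_trans by auto
    then show ?thesis using peq_appL[of _ _ "[r, i]"] by simp
  qed
  also have "peq (r # i # j # r # i # w3) (r # j # i # r # i # w3)" using sw[of i j "[r]"] fij by simp
  also have "peq (r # j # i # r # i # w3) (r # j # r # i # r # w3)" using br[of i r "[r, j]"] air by simp
  also have "peq (r # j # r # i # r # w3) (j # r # j # i # r # w3)" using br0[OF arj] .
  finally have A: "peq u (al i j @ r # j # i # r # w3)" using e1 by simp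
  have "peq v (r # j # z2)" by (rule h4)
  also have "peq (r # j # z2) (r # j # i # r # j # w3)"
  proof -
    have "peq z2 (i # r # j # w3)" using w2(1) peq_appL[OF w3(2), of "[i, r]"] peq_trans by auto
    then show ?thesis using peq_appL[of _ _ "[r, j]"] by simp
  qed
  also have "peq (r # j # i # r # j # w3) (r # i # j # r # j # w3)" using sw[of j i "[r]"] fji by simp
  also have "peq (r # i # j # r # j # w3) (r # i # r # j # r # w3)" using br[of j r "[r, i]"] arj adj_sym by simp
  also have "peq (r # i # r # j # r # w3) (i # r # i # j # r # w3)" using br0[of r i] air adj_sym by simp
  also have "peq (i # r # i # j # r # w3) (i # r # j # i # r # w3)" using sw[of i j "[i, r]"] fij by simp
  finally have B: "peq v (al j i @ r # j # i # r # w3)" using e1 by simp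
  show ?thesis using A B by blast
qed



lemma comb: assumes IH: "\<forall>L'<L. GL L'" and lt: "length t = L"
  and h1: "peq u (al i r @ z1)" and h2: "peq t (al r i @ z1)" and h3: "peq t (al r j @ z2)" and h4: "peq v (al j r @ z2)"
  shows "\<exists>z. peq u (al i j @ z) \<and> peq v (al j i @ z)"
proof (cases "i = r")
  case True
  then have "al i r = []" "al r i = []" by (simp_all add: al_def)
  then have "peq u z1" "peq t z1" using h1 h2 by simp_all
  then have "peq u t" using peq_trans peq_sym by blast
  then have "peq u (al i j @ z2)" using h3 True peq_trans by blast
  then show ?thesis using h4 True by blast
next
  case ir: False
  show ?thesis
  proof (cases "r = j")
    case True
    then have "al r j = []" "al j r = []" by (simp_all add: al_def)
    then have "peq v z2" "peq t z2" using h3 h4 by simp_all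
    then have "peq v t" using peq_trans peq_sym by blast
    then have "peq v (al j i @ z1)" using h2 True peq_trans by blast
    then show ?thesis using h1 True by blast
  next
    case rj: False
    show ?thesis
    proof (cases "i = j")
      case True
      have "peq (al r i @ z1) (al r i @ z2)" using h2 h3 True peq_sym peq_trans by blast
      moreover have "length (al r i @ z1) \<le> L" using peq_length[OF h2] lt by simp
      ultimately have "peq z1 z2" using cancp[OF IH] by blast
      then have "peq v u" using h4 h1 True peq_appL[of z2 z1 "al i r"] peq_sym peq_trans by blast
      moreover have "al i j = []" "al j i = []" using True by (simp_all add: al_def)
      ultimately show ?thesis by (metis append.left_neutral rtranclp.rtrancl_refl)
    next
      case ij: False
      show ?thesis
      proof (cases "adj i r")
        case air: True
        then have e1: "al i r = [r, i]" "al r i = [i, r]" using adj_sym adj_al by auto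
        show ?thesis
        proof (cases "adj r j")
          case True
          then have "al r j = [j, r]" "al j r = [r, j]" using adj_sym adj_al by auto
          then show ?thesis using comb_d[OF IH lt air True ij] h1 h2 h3 h4 e1 by simp
        next
          case False
          then have frj: "far j r" using rj by (auto simp: far_def adj_def)
          then have "al r j = [j]" "al j r = [r]" using far_sym far_al by auto
          then have "\<exists>z. peq v (al j i @ z) \<and> peq u (al i j @ z)"
            using comb_b[OF IH lt frj adj_sym[OF air], of v z2 z1 u] h1 h2 h3 h4 e1 by simp
          then show ?thesis by blast
        qed
      next
        case nair: False
        then have fir: "far i r" using ir by (auto simp: far_def)
        then have e1: "al i r = [r]" "al r i = [i]" using far_sym far_al by auto
        show ?thesis
        proof (cases "adj r j")
          case True
          then have "al r j = [j, r]" "al j r = [r, j]" using adj_sym adj_al by auto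
          then show ?thesis using comb_b[OF IH lt fir True] h1 h2 h3 h4 e1 by simp
        next
          case False
          then have frj: "far r j" using rj by (auto simp: far_def adj_def)
          then have "al r j = [j]" "al j r = [r]" using far_sym far_al by auto
          then show ?thesis using comb_a[OF IH lt fir frj] h1 h2 h3 h4 e1 by simp
        qed
      qed
    qed
  qed
qed

lemma GL_step: assumes IH: "\<forall>L'<L. GL L'" shows "GL L"
proof -
  have main: "peq a b \<Longrightarrow> \<forall>i u. a = i # u \<longrightarrow> length u = L \<longrightarrow> (\<forall>j v. b = j # v \<longrightarrow>
      (\<exists>z. peq u (al i j @ z) \<and> peq v (al j i @ z)))" for a b
  proof (induction rule: converse_rtranclp_induct)
    case base
    then show ?case by (auto simp: al_def)
  next
    case (step a a')
    show ?case
    proof (intro allI impI)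
      fix i u j v
      assume a: "a = i # u" "length u = L" "b = j # v"
      have "length a' = Suc L" using pstep_length[OF step.hyps(1)] a by simp
      then obtain r t where a': "a' = r # t" by (cases a') auto
      with \<open>length a' = Suc L\<close> have lt: "length t = L" by simp
      obtain z1 where z1: "peq u (al i r @ z1)" "peq t (al r i @ z1)" using single step.hyps(1) a a' by blast
      obtain z2 where z2: "peq t (al r j @ z2)" "peq v (al j r @ z2)" using step.IH a' lt a by blast
      show "\<exists>z. peq u (al i j @ z) \<and> peq v (al j i @ z)" by (rule comb[OF IH lt z1 z2])
    qed
  qed
  show ?thesis unfolding GL_def using main by blast
qed

lemma GL_all: "GL L"
  by (induction L rule: less_induct) (use GL_step in blast)

lemma garside: "peq (i # u) (j # v) \<Longrightarrow> \<exists>z. peq u (al i j @ z) \<and> peq v (al j i @ z)"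
  using GL_all unfolding GL_def by blast

lemma cancel1: "peq (a # p) (a # q) \<Longrightarrow> peq p q"
proof -
  assume "peq (a # p) (a # q)"
  then obtain z where "peq p z" "peq q z" using garside[of a p a q] by (auto simp: al_def)
  then show ?thesis using peq_sym peq_trans by blast
qed

lemma cancelL: "peq (p @ x) (p @ y) \<Longrightarrow> peq x y"
  by (induction p) (auto dest: cancel1)

lemma pstep_rev: "pstep u v \<Longrightarrow> pstep (rev u) (rev v)"
proof -
  assume "pstep u v"
  then obtain x y a b where e: "u = x @ a @ y" "v = x @ b @ y" "brel a b" unfolding pstep_def by blast
  have "brel (rev a) (rev b)" using e(3) far_sym unfolding brel_def by auto
  then show ?thesis using e unfolding pstep_def by (metis append.assoc rev_append)
qed

lemma peq_rev: "peq u v \<Longrightarrow> peq (rev u) (rev v)"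
  by (induction rule: rtranclp_induct) (auto intro: rtranclp.rtrancl_into_rtrancl pstep_rev)

lemma cancelR: "peq (x @ p) (y @ p) \<Longrightarrow> peq x y"
proof -
  assume "peq (x @ p) (y @ p)"
  then have "peq (rev p @ rev x) (rev p @ rev y)" using peq_rev by fastforce
  then have "peq (rev x) (rev y)" by (rule cancelL)
  then show ?thesis using peq_rev by fastforce
qed



definition dv :: "nat list \<Rightarrow> nat list \<Rightarrow> bool" where "dv a c \<longleftrightarrow> (\<exists>x. peq (a @ x) c)"

lemma dv_refl: "dv a a" unfolding dv_def by (rule exI[of _ "[]"]) simp
lemma dv_nil: "dv [] c" unfolding dv_def by auto

lemma dv_trans: "dv a b \<Longrightarrow> dv b c \<Longrightarrow> dv a c"
proof -
  assume "dv a b" "dv b c"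
  then obtain x y where "peq (a @ x) b" "peq (b @ y) c" unfolding dv_def by blast
  then have "peq (a @ x @ y) c" using peq_appR[of "a @ x" b y] peq_trans by auto
  then show ?thesis unfolding dv_def by blast
qed

lemma dv_peqR: "dv a b \<Longrightarrow> peq b c \<Longrightarrow> dv a c"
  unfolding dv_def using peq_trans by blast

lemma dv_peqL: "peq a a' \<Longrightarrow> dv a b \<Longrightarrow> dv a' b"
proof -
  assume "peq a a'" "dv a b"
  then obtain x where "peq (a @ x) b" unfolding dv_def by blast
  moreover have "peq (a' @ x) (a @ x)" using peq_appR[OF peq_sym[OF \<open>peq a a'\<close>]] .
  ultimately show ?thesis unfolding dv_def using peq_trans by blast
qed

lemma dv_app: "dv a b \<Longrightarrow> dv (p @ a) (p @ b)"
  unfolding dv_def using peq_appL by fastforce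

lemma dv_appD: "dv (p @ a) (p @ b) \<Longrightarrow> dv a b"
  unfolding dv_def using cancelL by fastforce

lemma dv_prefix: "dv (p @ a) d \<Longrightarrow> \<exists>d1. peq d (p @ d1) \<and> dv a d1"
proof -
  assume "dv (p @ a) d"
  then obtain x where "peq (p @ a @ x) d" unfolding dv_def by auto
  then show ?thesis using peq_sym unfolding dv_def by blast
qed

lemma dv_pre: "dv (p @ a) d \<Longrightarrow> dv p d"
  unfolding dv_def by (metis append.assoc)

lemma dv_antisym: "dv a b \<Longrightarrow> dv b a \<Longrightarrow> peq a b"
proof -
  assume "dv a b" "dv b a"
  then obtain x y where xy: "peq (a @ x) b" "peq (b @ y) a" unfolding dv_def by blast
  have "length (a @ x) = length b" "length (b @ y) = length a" using xy peq_length by blast+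
  then have "x = []" by (cases x) auto
  then show ?thesis using xy by simp
qed

lemma atom_lcm: "dv [i] c \<Longrightarrow> dv [j] c \<Longrightarrow> dv (i # al i j) c"
proof -
  assume "dv [i] c" "dv [j] c"
  then obtain x y where "peq (i # x) c" "peq (j # y) c" unfolding dv_def by auto
  then have "peq (i # x) (j # y)" using peq_sym peq_trans by blast
  then obtain z where "peq x (al i j @ z)" using garside by blast
  then have "peq (i # al i j @ z) c" using \<open>peq (i # x) c\<close> peq_Cons peq_sym peq_trans by blast
  then show ?thesis unfolding dv_def by (metis append_Cons)
qed

lemma lcm_sym: "peq (i # al i j) (j # al j i)"
proof -
  consider "i = j" | "adj i j" | "far i j" by (auto simp: far_def)
  then show ?thesis
  proof cases
    case 1 then show ?thesis by simp
  next
    case 2 then show ?thesis using br0[of i j "[]"] by (simp add: adj_al adj_sym)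
  next
    case 3 then show ?thesis using sw0[of i j "[]"] by (simp add: far_al far_sym)
  qed
qed

definition is_lcm :: "nat list \<Rightarrow> nat list \<Rightarrow> nat list \<Rightarrow> bool" where
  "is_lcm a b m \<longleftrightarrow> dv a m \<and> dv b m \<and> (\<forall>d. dv a d \<and> dv b d \<longrightarrow> dv m d)"

lemma lcm_pre: "is_lcm a b m \<Longrightarrow> is_lcm (p @ a) (p @ b) (p @ m)"
proof -
  assume h: "is_lcm a b m"
  have "dv (p @ m) d" if t1: "dv (p @ a) d" and t2: "dv (p @ b) d" for d
  proof -
    obtain d1 where d1: "peq d (p @ d1)" "dv a d1" using dv_prefix[OF t1] by blast
    have "dv (p @ b) (p @ d1)" using t2 d1(1) dv_peqR by blast
    then have "dv b d1" by (rule dv_appD)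
    then have "dv m d1" using h d1 unfolding is_lcm_def by blast
    then have "dv (p @ m) (p @ d1)" by (rule dv_app)
    then show ?thesis using dv_peqR peq_sym d1(1) by blast
  qed
  then show ?thesis using h dv_app unfolding is_lcm_def by blast
qed

lemma lcm_exists: "dv a c \<Longrightarrow> dv b c \<Longrightarrow> \<exists>m. is_lcm a b m"
proof (induction "length c" arbitrary: a b c rule: less_induct)
  case less
  show ?case
  proof (cases a)
    case Nil
    then have "is_lcm a b b" unfolding is_lcm_def using dv_nil dv_refl by blast
    then show ?thesis by blast
  next
    case (Cons i a1)
    show ?thesis
    proof (cases b)
      case Nil
      then have "is_lcm a b a" unfolding is_lcm_def using dv_nil dv_refl by blast
      then show ?thesis by blast
    next
      case (Cons j b1)
      obtain c1 where c1: "peq c ([i] @ c1)" "dv a1 c1" using dv_prefix[of "[i]" a1 c] less.prems(1) \<open>a = i # a1\<close> by auto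
      have lc1: "length c1 < length c" using peq_length[OF c1(1)] by simp
      obtain c2 where c2: "peq c ([j] @ c2)" "dv b1 c2" using dv_prefix[of "[j]" b1 c] less.prems(2) Cons by auto
      have lc2: "length c2 < length c" using peq_length[OF c2(1)] by simp
      show ?thesis
      proof (cases "i = j")
        case True
        have "dv ([i] @ b1) ([i] @ c1)" using less.prems(2) Cons True c1(1) dv_peqR by auto
        then have "dv b1 c1" by (rule dv_appD)
        then obtain m1 where "is_lcm a1 b1 m1" using less.hyps[OF lc1 c1(2)] by blast
        then have "is_lcm ([i] @ a1) ([i] @ b1) ([i] @ m1)" by (rule lcm_pre)
        then show ?thesis using Cons \<open>a = i # a1\<close> True by auto
      next
        case False
        define \<Lambda> where "\<Lambda> = i # al i j"
        define \<Lambda>' where "\<Lambda>' = j # al j i"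
        have LL: "peq \<Lambda>' \<Lambda>" unfolding \<Lambda>_def \<Lambda>'_def using lcm_sym peq_sym by blast
        have di: "dv [i] c" using less.prems(1) \<open>a = i # a1\<close> dv_pre[of "[i]" a1 c] by simp
        have dj: "dv [j] c" using less.prems(2) Cons dv_pre[of "[j]" b1 c] by simp
        have dL: "dv \<Lambda> c" unfolding \<Lambda>_def using atom_lcm[OF di dj] .
        have dL': "dv \<Lambda>' c" unfolding \<Lambda>'_def using atom_lcm[OF dj di] .
        have "dv ([i] @ al i j) ([i] @ c1)" using dL c1(1) dv_peqR unfolding \<Lambda>_def by auto
        then have "dv (al i j) c1" by (rule dv_appD)
        then obtain m1 where "is_lcm a1 (al i j) m1" using less.hyps[OF lc1 c1(2)] by blast
        then have A: "is_lcm a \<Lambda> (i # m1)" using lcm_pre[of a1 "al i j" m1 "[i]"] \<open>a = i # a1\<close> unfolding \<Lambda>_def by simp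
        have "dv ([j] @ al j i) ([j] @ c2)" using dL' c2(1) dv_peqR unfolding \<Lambda>'_def by auto
        then have "dv (al j i) c2" by (rule dv_appD)
        then obtain m2 where "is_lcm b1 (al j i) m2" using less.hyps[OF lc2 c2(2)] by blast
        then have B: "is_lcm b \<Lambda>' (j # m2)" using lcm_pre[of b1 "al j i" m2 "[j]"] Cons unfolding \<Lambda>'_def by simp
        have dAc: "dv (i # m1) c" using A less.prems(1) dL unfolding is_lcm_def by blast
        have dBc: "dv (j # m2) c" using B less.prems(2) dL' unfolding is_lcm_def by blast
        have dLA: "dv (\<Lambda> @ []) (i # m1)" using A unfolding is_lcm_def by simp
        have dLB: "dv (\<Lambda> @ []) (j # m2)" using B dv_peqL[OF LL] unfolding is_lcm_def by simp
        obtain A' where A': "peq (i # m1) (\<Lambda> @ A')" using dv_prefix[OF dLA] by blast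
        obtain B' where B': "peq (j # m2) (\<Lambda> @ B')" using dv_prefix[OF dLB] by blast
        obtain c3 where c3: "peq c (\<Lambda> @ c3)" using dv_prefix[of \<Lambda> "[]" c] dL by auto
        have lc3: "length c3 < length c" using peq_length[OF c3] unfolding \<Lambda>_def by simp
        have "dv (\<Lambda> @ A') (\<Lambda> @ c3)" using dAc A' c3 dv_peqL dv_peqR by blast
        then have dA3: "dv A' c3" by (rule dv_appD)
        have "dv (\<Lambda> @ B') (\<Lambda> @ c3)" using dBc B' c3 dv_peqL dv_peqR by blast
        then have dB3: "dv B' c3" by (rule dv_appD)
        obtain M where M: "is_lcm A' B' M" using less.hyps[OF lc3 dA3 dB3] by blast
        have "is_lcm a b (\<Lambda> @ M)"
          unfolding is_lcm_def
        proof (intro conjI allI impI)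
          have "dv (\<Lambda> @ A') (\<Lambda> @ M)" using M dv_app unfolding is_lcm_def by blast
          then have "dv (i # m1) (\<Lambda> @ M)" using dv_peqL peq_sym A' by blast
          then show "dv a (\<Lambda> @ M)" using A dv_trans unfolding is_lcm_def by blast
          have "dv (\<Lambda> @ B') (\<Lambda> @ M)" using M dv_app unfolding is_lcm_def by blast
          then have "dv (j # m2) (\<Lambda> @ M)" using dv_peqL peq_sym B' by blast
          then show "dv b (\<Lambda> @ M)" using B dv_trans unfolding is_lcm_def by blast
        next
          fix d assume d: "dv a d \<and> dv b d"
          have "dv [i] d" using d \<open>a = i # a1\<close> dv_pre[of "[i]" a1 d] by simp
          moreover have "dv [j] d" using d Cons dv_pre[of "[j]" b1 d] by simp
          ultimately have dLd: "dv \<Lambda> d" unfolding \<Lambda>_def by (rule atom_lcm)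
          then have "dv \<Lambda>' d" using dv_peqL peq_sym LL by blast
          have dA: "dv (i # m1) d" using A d dLd unfolding is_lcm_def by blast
          have dB: "dv (j # m2) d" using B d \<open>dv \<Lambda>' d\<close> unfolding is_lcm_def by blast
          obtain d' where d': "peq d (\<Lambda> @ d')" using dv_prefix[of \<Lambda> "[]" d] dLd by auto
          have "dv (\<Lambda> @ A') (\<Lambda> @ d')" using dA A' d' dv_peqL dv_peqR by blast
          then have "dv A' d'" by (rule dv_appD)
          moreover have "dv (\<Lambda> @ B') (\<Lambda> @ d')" using dB B' d' dv_peqL dv_peqR by blast
          then have "dv B' d'" by (rule dv_appD)
          ultimately have "dv M d'" using M unfolding is_lcm_def by blast
          then have "dv (\<Lambda> @ M) (\<Lambda> @ d')" by (rule dv_app)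
          then show "dv (\<Lambda> @ M) d" using d' peq_sym dv_peqR by blast
        qed
        then show ?thesis by blast
      qed
    qed
  qed
qed

lemma lcm_list: "(\<forall>s\<in>set S. dv s c) \<Longrightarrow> \<exists>m. (\<forall>s\<in>set S. dv s m) \<and> (\<forall>d. (\<forall>s\<in>set S. dv s d) \<longrightarrow> dv m d)"
proof (induction S)
  case Nil then show ?case using dv_nil by auto
next
  case (Cons x S)
  then obtain m0 where m0: "\<forall>s\<in>set S. dv s m0" "\<forall>d. (\<forall>s\<in>set S. dv s d) \<longrightarrow> dv m0 d" by auto
  have "dv m0 c" using m0(2) Cons.prems by auto
  moreover have "dv x c" using Cons.prems by auto
  ultimately obtain m where m: "is_lcm x m0 m" using lcm_exists by blast
  show ?case
  proof (intro exI conjI allI impI)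
    show "\<forall>s\<in>set (x # S). dv s m" using m m0(1) dv_trans unfolding is_lcm_def by auto
    fix d assume "\<forall>s\<in>set (x # S). dv s d"
    then show "dv m d" using m m0(2) unfolding is_lcm_def by auto
  qed
qed

lemma lcm_left: assumes "S \<noteq> []" "\<forall>d. (\<forall>s\<in>set S. dv s d) \<longrightarrow> dv m d" "\<forall>s\<in>set S. dv (P @ s) d"
  shows "dv (P @ m) d"
proof -
  obtain s0 where "s0 \<in> set S" using assms(1) by (cases S) auto
  then obtain d1 where d1: "peq d (P @ d1)" "dv s0 d1" using dv_prefix assms(3) by blast
  have "\<forall>s\<in>set S. dv s d1" using assms(3) d1(1) dv_peqR dv_appD by blast
  then have "dv m d1" using assms(2) by blast
  then have "dv (P @ m) (P @ d1)" by (rule dv_app)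
  then show ?thesis using d1(1) peq_sym dv_peqR by blast
qed



abbreviation pw :: "nat list \<Rightarrow> nat \<Rightarrow> nat list" where "pw x j \<equiv> concat (replicate j x)"

lemma comm_pow: "peq (D @ P) (P @ D) \<Longrightarrow> peq (D @ pw P j) (pw P j @ D)"
proof (induction j)
  case 0 then show ?case by simp
next
  case (Suc j)
  have "peq (D @ P @ pw P j) (P @ D @ pw P j)" using peq_appR[OF Suc.prems, of "pw P j"] by simp
  also have "peq (P @ D @ pw P j) (P @ pw P j @ D)" using peq_appL[OF Suc.IH[OF Suc.prems], of P] by simp
  finally show ?case by simp
qed

lemma pw_add: "pw x (a + b) = pw x a @ pw x b" by (simp add: replicate_add)

lemma torsion: assumes k: "k \<ge> 1" and e: "peq (pw P k) (pw D k)" and c: "peq (D @ P) (P @ D)"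
  shows "peq P D"
proof -
  define a where "a j = pw D (k - 1 - j) @ pw P j" for j
  define S where "S = map a [0..<k]"
  have cPD: "peq (P @ pw D l) (pw D l @ P)" for l using comm_pow[OF peq_sym[OF c]] .
  have cDP: "peq (pw D l @ pw P j) (pw P j @ pw D l)" for l j
  proof (induction l)
    case 0 then show ?case by simp
  next
    case (Suc l)
    have "peq (D @ pw D l @ pw P j) (D @ pw P j @ pw D l)" using peq_appL[OF Suc.IH, of D] .
    also have "peq (D @ pw P j @ pw D l) (pw P j @ D @ pw D l)" using peq_appR[OF comm_pow[OF c, of j], of "pw D l"] by simp
    finally show ?case by simp
  qed
  have i1: "peq (P @ a j) (D @ a (Suc j))" if "j < k - 1" for j
  proof -
    have kk: "k - 1 - j = Suc (k - 1 - Suc j)" using that by simp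
    have "peq (P @ a j) (pw D (k - 1 - j) @ P @ pw P j)" unfolding a_def using peq_appR[OF cPD] by fastforce
    then show ?thesis unfolding a_def using kk by simp
  qed
  have i2: "peq (P @ a (k - 1)) (D @ a 0)"
  proof -
    have "P @ a (k - 1) = pw P k" unfolding a_def using k by (cases k) auto
    moreover have "D @ a 0 = pw D k" unfolding a_def using k by (cases k) auto
    ultimately show ?thesis using e by simp
  qed
  have ub: "\<forall>s\<in>set S. dv s (pw D (k - 1) @ pw P (k - 1))"
  proof
    fix s assume "s \<in> set S"
    then obtain j where j: "j < k" "s = a j" unfolding S_def by auto
    have "a j @ pw P (k - 1 - j) @ pw D j = pw D (k - 1 - j) @ pw P (k - 1) @ pw D j"
      unfolding a_def using j pw_add[where x=P and a=j and b="k - 1 - j"] by simp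
    also have "peq (pw D (k - 1 - j) @ pw P (k - 1) @ pw D j) (pw D (k - 1 - j) @ pw D j @ pw P (k - 1))"
      using peq_appL[OF peq_sym[OF cDP[of j "k - 1"]]] .
    also have "pw D (k - 1 - j) @ pw D j @ pw P (k - 1) = pw D (k - 1) @ pw P (k - 1)"
      using pw_add[where x=D and a="k - 1 - j" and b=j] j by simp
    finally show "dv s (pw D (k - 1) @ pw P (k - 1))" unfolding dv_def using j by (metis append.assoc)
  qed
  obtain m where m: "\<forall>s\<in>set S. dv s m" "\<forall>d. (\<forall>s\<in>set S. dv s d) \<longrightarrow> dv m d" using lcm_list[OF ub] by blast
  have Sne: "S \<noteq> []" unfolding S_def using k by simp
  have PD: "\<forall>s\<in>set S. dv (D @ s) d" if "\<forall>s\<in>set S. dv (P @ s) d" for d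
  proof
    fix s assume "s \<in> set S"
    then obtain j where j: "j < k" "s = a j" unfolding S_def by auto
    show "dv (D @ s) d"
    proof (cases j)
      case 0
      have "a (k - 1) \<in> set S" unfolding S_def using k by simp
      then have "dv (P @ a (k - 1)) d" using that by blast
      then show ?thesis using dv_peqL[OF i2] j 0 by simp
    next
      case (Suc j')
      have "a j' \<in> set S" unfolding S_def using j Suc by simp
      then have "dv (P @ a j') d" using that by blast
      moreover have "j' < k - 1" using j Suc by simp
      ultimately show ?thesis using dv_peqL[OF i1] j Suc by simp
    qed
  qed
  have DP: "\<forall>s\<in>set S. dv (P @ s) d" if "\<forall>s\<in>set S. dv (D @ s) d" for d
  proof
    fix s assume "s \<in> set S"
    then obtain j where j: "j < k" "s = a j" unfolding S_def by auto
    show "dv (P @ s) d"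
    proof (cases "j < k - 1")
      case True
      have "a (Suc j) \<in> set S" unfolding S_def using True by simp
      then have "dv (D @ a (Suc j)) d" using that by blast
      then show ?thesis using dv_peqL[OF peq_sym[OF i1[OF True]]] j by simp
    next
      case False
      then have jj: "j = k - 1" using j by simp
      have "a 0 \<in> set S" unfolding S_def using k by simp
      then have "dv (D @ a 0) d" using that by blast
      then show ?thesis using dv_peqL[OF peq_sym[OF i2]] j jj by simp
    qed
  qed
  have ubP: "\<forall>s\<in>set S. dv (P @ s) (P @ m)" using m(1) dv_app by blast
  have ubD: "\<forall>s\<in>set S. dv (D @ s) (D @ m)" using m(1) dv_app by blast
  have "dv (D @ m) (P @ m)" using lcm_left[OF Sne m(2) PD[OF ubP]] .
  moreover have "dv (P @ m) (D @ m)" using lcm_left[OF Sne m(2) DP[OF ubD]] .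
  ultimately have "peq (P @ m) (D @ m)" using dv_antisym by blast
  then show ?thesis by (rule cancelR)
qed



definition delta :: "nat \<Rightarrow> nat list" where "delta n = [1..<n]"
definition QQ :: "nat \<Rightarrow> nat list" where "QQ n = pw (delta n) n"
definition Dl :: "nat \<Rightarrow> nat \<Rightarrow> nat list" where "Dl n i = pw (delta n) (i - 1) @ [2..<n] @ pw (delta n) (n - i)"

lemma far_lt: "a + 2 \<le> b \<Longrightarrow> far a b \<and> far b a" by (auto simp: far_def adj_def)

lemma lemA: assumes "1 \<le> j" "j + 2 \<le> n" shows "peq (delta n @ [j]) (Suc j # delta n)"
proof -
  define T where "T = [Suc (Suc j)..<n]"
  have dn: "delta n = [1..<j] @ j # Suc j # T"
  proof -
    have "[1..<n] = [1..<j] @ [j..<n]" using assms upt_add_eq_append[of 1 j "n - j"] by simp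
    also have "[j..<n] = j # [Suc j..<n]" using assms upt_conv_Cons[of j n] by simp
    also have "[Suc j..<n] = Suc j # T" unfolding T_def using assms upt_conv_Cons[of "Suc j" n] by simp
    finally show ?thesis unfolding delta_def by simp
  qed
  have fT: "\<forall>x\<in>set T. far j x" unfolding T_def using far_lt by auto
  have fg: "\<forall>x\<in>set [1..<j]. far (Suc j) x" using far_lt by auto
  have "delta n @ [j] = ([1..<j] @ [j, Suc j]) @ T @ [j]" using dn by simp
  also have "peq (([1..<j] @ [j, Suc j]) @ T @ [j]) (([1..<j] @ [j, Suc j]) @ j # T)"
    using peq_appL[OF peq_sym[OF commute_far[OF fT, of "[]"]], of "[1..<j] @ [j, Suc j]"] by simp
  also have "([1..<j] @ [j, Suc j]) @ j # T = [1..<j] @ j # Suc j # j # T" by simp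
  also have "peq ([1..<j] @ j # Suc j # j # T) ([1..<j] @ Suc j # j # Suc j # T)"
    using br[of j "Suc j" "[1..<j]" T] by (simp add: adj_def)
  also have "peq ([1..<j] @ Suc j # j # Suc j # T) (Suc j # [1..<j] @ j # Suc j # T)"
    using peq_sym[OF commute_far[OF fg]] .
  finally show ?thesis using dn by simp
qed

lemma iter: assumes "1 \<le> j" shows "j + l + 1 \<le> n \<Longrightarrow> peq (pw (delta n) l @ [j]) ((j + l) # pw (delta n) l)"
proof (induction l)
  case 0 then show ?case by simp
next
  case (Suc l)
  have "peq (delta n @ pw (delta n) l @ [j]) (delta n @ (j + l) # pw (delta n) l)"
    using peq_appL[OF Suc.IH] Suc.prems by simp
  also have "peq (delta n @ (j + l) # pw (delta n) l) (Suc (j + l) # delta n @ pw (delta n) l)"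
    using peq_appR[OF lemA[of "j + l" n], of "pw (delta n) l"] assms Suc.prems by simp
  finally show ?case by simp
qed

lemma lemC: "2 \<le> n \<Longrightarrow> peq (pw (delta n) 2 @ [n - 1]) (1 # pw (delta n) 2)"
proof (induction n rule: nat_induct_at_least)
  case base
  then show ?case by (simp add: delta_def numeral_2_eq_2)
next
  case (Suc n)
  define g where "g = [1..<n - 1]"
  have dn: "delta n = g @ [n - 1]"
  proof -
    have "n = Suc (n - 1)" using Suc.hyps by simp
    then have "[1..<n] = [1..<Suc (n - 1)]" by simp
    also have "... = [1..<n - 1] @ [n - 1]" using Suc.hyps by (intro upt_Suc_append) simp
    finally show ?thesis unfolding g_def delta_def .
  qed
  have dSn: "delta (Suc n) = delta n @ [n]" unfolding delta_def using Suc.hyps by simp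
  have fg: "\<forall>x\<in>set g. far n x" unfolding g_def using far_lt by auto
  have adjn: "adj n (n - 1)" "adj (n - 1) n" using Suc.hyps by (auto simp: adj_def)
  have E: "peq (pw (delta (Suc n)) 2) (pw (delta n) 2 @ [n, n - 1])"
  proof -
    have "pw (delta (Suc n)) 2 = delta n @ (n # g @ [n - 1, n])" using dSn dn by (simp add: numeral_2_eq_2)
    also have "peq (delta n @ (n # g @ [n - 1, n])) (delta n @ (g @ [n, n - 1, n]))"
      using peq_appL[OF commute_far[OF fg, of "[n - 1, n]"]] by simp
    also have "peq (delta n @ (g @ [n, n - 1, n])) (delta n @ (g @ [n - 1, n, n - 1]))"
      using br[of n "n - 1" "delta n @ g" "[]"] adjn by simp
    also have "delta n @ (g @ [n - 1, n, n - 1]) = pw (delta n) 2 @ [n, n - 1]" using dn by (simp add: numeral_2_eq_2)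
    finally show ?thesis .
  qed
  have "peq (pw (delta (Suc n)) 2 @ [n]) (pw (delta n) 2 @ [n, n - 1, n])"
    using peq_appR[OF E, of "[n]"] by simp
  also have "peq (pw (delta n) 2 @ [n, n - 1, n]) (pw (delta n) 2 @ [n - 1, n, n - 1])"
    using br[of n "n - 1" "pw (delta n) 2" "[]"] adjn by simp
  also have "peq (pw (delta n) 2 @ [n - 1, n, n - 1]) (1 # pw (delta n) 2 @ [n, n - 1])"
    using peq_appR[OF Suc.IH, of "[n, n - 1]"] by simp
  also have "peq (1 # pw (delta n) 2 @ [n, n - 1]) (1 # pw (delta (Suc n)) 2)"
    using peq_Cons[OF peq_sym[OF E]] by simp
  finally show ?case by simp
qed

lemma Q_central1: assumes n: "2 \<le> n" and i: "1 \<le> i" "i \<le> n - 1" shows "peq (QQ n @ [i]) (i # QQ n)"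
proof -
  let ?A = "pw (delta n) (i - 1)" and ?B = "pw (delta n) 2" and ?C = "pw (delta n) (n - 1 - i)"
  have QQ: "QQ n = ?A @ ?B @ ?C"
  proof -
    have e: "(i - 1) + (2 + (n - 1 - i)) = n" using n i by simp
    have "QQ n = pw (delta n) ((i - 1) + (2 + (n - 1 - i)))" unfolding QQ_def by (simp only: e)
    then show ?thesis by (simp only: pw_add)
  qed
  have "peq (?A @ ?B @ ?C @ [i]) (?A @ ?B @ (i + (n - 1 - i)) # ?C)"
    using peq_appL[OF iter[of i "n - 1 - i" n], of "?A @ ?B"] n i by simp
  also have "i + (n - 1 - i) = n - 1" using i by simp
  also have "peq (?A @ ?B @ (n - 1) # ?C) (?A @ 1 # ?B @ ?C)"
    using peq_appL[OF peq_appR[OF lemC[OF n], of ?C], of ?A] by simp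
  also have "peq (?A @ 1 # ?B @ ?C) ((1 + (i - 1)) # ?A @ ?B @ ?C)"
    using peq_appR[OF iter[of 1 "i - 1" n], of "?B @ ?C"] n i by simp
  also have "1 + (i - 1) = i" using i by simp
  finally show ?thesis using QQ by simp
qed

lemma Q_Dl: assumes n: "2 \<le> n" and i: "1 \<le> i" "i \<le> n - 1" shows "peq (QQ n) (i # Dl n i)"
proof -
  have d: "delta n = 1 # [2..<n]" unfolding delta_def using n by (simp add: upt_conv_Cons numeral_2_eq_2)
  have e: "(i - 1) + (1 + (n - i)) = n" using n i by simp
  have "QQ n = pw (delta n) ((i - 1) + (1 + (n - i)))" unfolding QQ_def by (simp only: e)
  then have "QQ n = pw (delta n) (i - 1) @ [1] @ [2..<n] @ pw (delta n) (n - i)" using d by (simp only: pw_add) simp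
  also have "peq (pw (delta n) (i - 1) @ [1] @ [2..<n] @ pw (delta n) (n - i)) ((1 + (i - 1)) # pw (delta n) (i - 1) @ [2..<n] @ pw (delta n) (n - i))"
    using peq_appR[OF iter[of 1 "i - 1" n], of "[2..<n] @ pw (delta n) (n - i)"] n i by simp
  also have "1 + (i - 1) = i" using i by simp
  finally show ?thesis unfolding Dl_def .
qed

lemma Dl_Q: assumes n: "2 \<le> n" and i: "1 \<le> i" "i \<le> n - 1" shows "peq (Dl n i @ [i]) (QQ n)"
proof -
  have "peq (i # Dl n i @ [i]) (QQ n @ [i])" using peq_appR[OF peq_sym[OF Q_Dl[OF assms]], of "[i]"] by simp
  also have "peq (QQ n @ [i]) (i # QQ n)" by (rule Q_central1[OF assms])
  finally show ?thesis by (rule cancel1)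
qed

definition vset :: "nat \<Rightarrow> nat set" where "vset n = {i. 1 \<le> i \<and> i \<le> n - 1}"

lemma Q_central: "2 \<le> n \<Longrightarrow> set w \<subseteq> vset n \<Longrightarrow> peq (QQ n @ w) (w @ QQ n)"
proof (induction w)
  case Nil then show ?case by simp
next
  case (Cons a w)
  have "peq (QQ n @ [a] @ w) (a # QQ n @ w)" using peq_appR[OF Q_central1[of n a], of w] Cons.prems by (simp add: vset_def)
  also have "peq (a # QQ n @ w) (a # w @ QQ n)" using Cons by (auto intro: peq_Cons)
  finally show ?case by simp
qed

lemma pwQ_central: "2 \<le> n \<Longrightarrow> set w \<subseteq> vset n \<Longrightarrow> peq (pw (QQ n) l @ w) (w @ pw (QQ n) l)"
proof (induction l)
  case 0 then show ?case by simp
next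
  case (Suc l)
  have "peq (QQ n @ pw (QQ n) l @ w) (QQ n @ w @ pw (QQ n) l)" using peq_appL[OF Suc.IH[OF Suc.prems]] .
  also have "peq (QQ n @ w @ pw (QQ n) l) (w @ QQ n @ pw (QQ n) l)" using peq_appR[OF Q_central[OF Suc.prems]] by simp
  finally show ?case by simp
qed

lemma set_delta: "set (delta n) \<subseteq> vset n" unfolding delta_def vset_def by auto
lemma set_pw: "set x \<subseteq> V \<Longrightarrow> set (pw x l) \<subseteq> V" by (induction l) auto
lemma set_QQ: "set (QQ n) \<subseteq> vset n" unfolding QQ_def using set_pw set_delta by blast
lemma set_Dl: "set (Dl n i) \<subseteq> vset n" unfolding Dl_def using set_pw[OF set_delta] by (auto simp: vset_def)



lemma beq_refl: "braid_eq n w w" by (rule braid_eq.refl)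
lemma beq_sym: "braid_eq n u v \<Longrightarrow> braid_eq n v u" by (rule braid_eq.sym)
lemma beq_trans[trans]: "braid_eq n u v \<Longrightarrow> braid_eq n v w \<Longrightarrow> braid_eq n u w" by (rule braid_eq.trans)

lemma beq_appL: "braid_eq n u v \<Longrightarrow> braid_eq n (x @ u) (x @ v)"
  using braid_eq.ctxt[of n u v x "[]"] by simp
lemma beq_appR: "braid_eq n u v \<Longrightarrow> braid_eq n (u @ y) (v @ y)"
  using braid_eq.ctxt[of n u v "[]" y] by simp
lemma beq_app: "braid_eq n a b \<Longrightarrow> braid_eq n c d \<Longrightarrow> braid_eq n (a @ c) (b @ d)"
  using beq_appL beq_appR beq_trans by blast

lemma inv_word_Cons: "inv_word (a # w) = inv_word w @ [(fst a, \<not> snd a)]"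
  unfolding inv_word_def by (cases a) auto
lemma inv_word_Nil: "inv_word [] = []" unfolding inv_word_def by simp

lemma valid_Cons: "valid_word n (a # w) \<longleftrightarrow> 1 \<le> fst a \<and> fst a \<le> n - 1 \<and> valid_word n w"
  unfolding valid_word_def by (cases a) auto

lemma valid_app: "valid_word n (u @ w) \<longleftrightarrow> valid_word n u \<and> valid_word n w"
  unfolding valid_word_def by auto

lemma inv_right: "valid_word n w \<Longrightarrow> braid_eq n (w @ inv_word w) []"
proof (induction w)
  case Nil then show ?case by (simp add: inv_word_Nil beq_refl)
next
  case (Cons a w)
  obtain i b where a: "a = (i, b)" by (cases a)
  have v: "1 \<le> i" "i \<le> n - 1" "valid_word n w" using Cons.prems a by (auto simp: valid_Cons)
  have "braid_eq n ([a] @ (w @ inv_word w) @ [(i, \<not> b)]) ([a] @ [] @ [(i, \<not> b)])"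
    using beq_appL[OF beq_appR[OF Cons.IH[OF v(3)]]] by blast
  also have "braid_eq n ([a] @ [] @ [(i, \<not> b)]) []" using braid_eq.cancel[OF v(1,2), of b] a by simp
  finally show ?case using a by (simp add: inv_word_Cons)
qed

lemma inv_left: "valid_word n w \<Longrightarrow> braid_eq n (inv_word w @ w) []"
proof (induction w)
  case Nil then show ?case by (simp add: inv_word_Nil beq_refl)
next
  case (Cons a w)
  obtain i b where a: "a = (i, b)" by (cases a)
  have v: "1 \<le> i" "i \<le> n - 1" "valid_word n w" using Cons.prems a by (auto simp: valid_Cons)
  have "braid_eq n (inv_word w @ [(i, \<not> b), (i, \<not> \<not> b)] @ w) (inv_word w @ [] @ w)"
    using beq_appL[OF beq_appR[OF braid_eq.cancel[OF v(1,2), of "\<not> b"]]] by blast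
  also have "braid_eq n (inv_word w @ [] @ w) []" using Cons.IH[OF v(3)] by simp
  finally show ?case using a by (simp add: inv_word_Cons)
qed

lemma beq_cancelL: "valid_word n p \<Longrightarrow> braid_eq n (p @ u) (p @ v) \<Longrightarrow> braid_eq n u v"
proof -
  assume vp: "valid_word n p" and h: "braid_eq n (p @ u) (p @ v)"
  have "braid_eq n u ((inv_word p @ p) @ u)" using beq_sym[OF beq_appR[OF inv_left[OF vp], of u]] by simp
  also have "braid_eq n ((inv_word p @ p) @ u) ((inv_word p @ p) @ v)" using beq_appL[OF h, of "inv_word p"] by simp
  also have "braid_eq n ((inv_word p @ p) @ v) v" using beq_appR[OF inv_left[OF vp], of v] by simp
  finally show ?thesis .
qed

definition pos :: "nat list \<Rightarrow> bword" where "pos w = map (\<lambda>i. (i, True)) w"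

lemma pos_app: "pos (u @ v) = pos u @ pos v" unfolding pos_def by simp
lemma pos_Cons: "pos (a # v) = (a, True) # pos v" unfolding pos_def by simp
lemma valid_pos: "set w \<subseteq> vset n \<Longrightarrow> valid_word n (pos w)" unfolding pos_def valid_word_def vset_def by auto

lemma pstep_beq: assumes "pstep u v" "set u \<subseteq> vset n" shows "braid_eq n (pos u) (pos v)"
proof -
  obtain x y a b where e: "u = x @ a @ y" "v = x @ b @ y" "brel a b" using assms(1) unfolding pstep_def by blast
  have sa: "set a \<subseteq> vset n" using assms(2) e(1) by auto
  have "braid_eq n (pos a) (pos b)"
  proof -
    from e(3) obtain i j where "(far i j \<and> a = [i,j] \<and> b = [j,i]) \<or> (adj i j \<and> a = [i,j,i] \<and> b = [j,i,j])"
      unfolding brel_def by blast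
    then show ?thesis
    proof
      assume h: "far i j \<and> a = [i,j] \<and> b = [j,i]"
      then have "i + 1 < j \<or> j + 1 < i" by (auto simp: far_def adj_def)
      then show ?thesis using h sa braid_eq.comm[of i n j] by (auto simp: pos_def vset_def)
    next
      assume h: "adj i j \<and> a = [i,j,i] \<and> b = [j,i,j]"
      then have "i + 1 = j \<or> j + 1 = i" by (auto simp: adj_def)
      then show ?thesis using h sa braid_eq.braid[of i n j] by (auto simp: pos_def vset_def)
    qed
  qed
  then show ?thesis using e braid_eq.ctxt by (simp add: pos_app)
qed

lemma peq_beq: "peq u v \<Longrightarrow> set u \<subseteq> vset n \<Longrightarrow> braid_eq n (pos u) (pos v)"
proof (induction rule: rtranclp_induct)
  case base then show ?case using beq_refl by blast
next
  case (step y z)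
  have "set y = set u" using peq_set[OF step.hyps(1)] by simp
  then have "braid_eq n (pos y) (pos z)" using pstep_beq step by simp
  then show ?case using step beq_trans by blast
qed

definition phi :: "nat \<Rightarrow> bletter \<Rightarrow> nat list" where
  "phi n a = (if 1 \<le> fst a \<and> fst a \<le> n - 1 then (if snd a then QQ n @ [fst a] else Dl n (fst a)) else QQ n)"

definition Phi :: "nat \<Rightarrow> bword \<Rightarrow> nat list" where "Phi n w = concat (map (phi n) w)"

lemma Phi_app: "Phi n (u @ v) = Phi n u @ Phi n v" unfolding Phi_def by simp
lemma Phi_Cons: "Phi n (a # v) = phi n a @ Phi n v" unfolding Phi_def by simp
lemma Phi_Nil: "Phi n [] = []" unfolding Phi_def by simp

lemma set_phi: "set (phi n a) \<subseteq> vset n" unfolding phi_def using set_QQ set_Dl by (auto simp: vset_def)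
lemma set_Phi: "set (Phi n w) \<subseteq> vset n" unfolding Phi_def using set_phi by auto

lemma pw_comm: "pw x a @ pw x b = pw x b @ pw x a"
  by (metis pw_add add.commute)

lemma phi_pos: "2 \<le> n \<Longrightarrow> set w \<subseteq> vset n \<Longrightarrow> peq (Phi n (pos w)) (pw (QQ n) (length w) @ w)"
proof (induction w)
  case Nil then show ?case by (simp add: Phi_Nil pos_def)
next
  case (Cons a w)
  have va: "1 \<le> a" "a \<le> n - 1" using Cons.prems by (auto simp: vset_def)
  have "Phi n (pos (a # w)) = QQ n @ [a] @ Phi n (pos w)" using va by (simp add: pos_Cons Phi_Cons phi_def)
  also have "peq (QQ n @ [a] @ Phi n (pos w)) (QQ n @ [a] @ pw (QQ n) (length w) @ w)"
    using peq_appL[OF Cons.IH, of "QQ n @ [a]"] Cons.prems by simp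
  also have "peq (QQ n @ [a] @ pw (QQ n) (length w) @ w) (QQ n @ pw (QQ n) (length w) @ [a] @ w)"
    using peq_appL[OF peq_appR[OF peq_sym[OF pwQ_central[of n "[a]" "length w"]]], of "QQ n" w] Cons.prems by (auto simp: vset_def)
  finally show ?case by simp
qed

definition RR :: "nat \<Rightarrow> bword \<Rightarrow> bword \<Rightarrow> bool" where
  "RR n u v \<longleftrightarrow> peq (Phi n u @ pw (QQ n) (length v)) (Phi n v @ pw (QQ n) (length u))"

lemma RR_pos: assumes n: "2 \<le> n" and s: "set a \<subseteq> vset n" "set b \<subseteq> vset n" and l: "length a = length b"
  and p: "peq a b" shows "RR n (pos a) (pos b)"
proof -
  have "peq (Phi n (pos a)) (pw (QQ n) (length a) @ a)" using phi_pos[OF n s(1)] .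
  also have "peq (pw (QQ n) (length a) @ a) (pw (QQ n) (length b) @ b)" using peq_appL[OF p] l by simp
  also have "peq (pw (QQ n) (length b) @ b) (Phi n (pos b))" using peq_sym[OF phi_pos[OF n s(2)]] .
  finally show ?thesis unfolding RR_def using l peq_appR by (simp add: pos_def)
qed

lemma braid_RR: assumes n: "2 \<le> n" shows "braid_eq n u v \<Longrightarrow> RR n u v"
proof (induction rule: braid_eq.induct)
  case (cancel i b)
  have "peq (Phi n [(i, b), (i, \<not> b)]) (QQ n @ QQ n)"
  proof (cases b)
    case True
    then have "Phi n [(i, b), (i, \<not> b)] = QQ n @ [i] @ Dl n i" using cancel by (simp add: Phi_def phi_def)
    also have "peq (QQ n @ [i] @ Dl n i) (QQ n @ QQ n)" using peq_appL[OF peq_sym[OF Q_Dl[OF n cancel]]] by simp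
    finally show ?thesis .
  next
    case False
    then have "Phi n [(i, b), (i, \<not> b)] = Dl n i @ QQ n @ [i]" using cancel by (simp add: Phi_def phi_def)
    also have "peq (Dl n i @ QQ n @ [i]) (Dl n i @ [i] @ QQ n)" using peq_appL[OF Q_central1[OF n cancel]] by simp
    also have "peq (Dl n i @ [i] @ QQ n) (QQ n @ QQ n)" using peq_appR[OF Dl_Q[OF n cancel]] by simp
    finally show ?thesis .
  qed
  then show ?case unfolding RR_def by (simp add: Phi_Nil numeral_2_eq_2)
next
  case (comm i j)
  have "far i j" using comm by (auto simp: far_def adj_def)
  then have "peq [i, j] [j, i]" using sw0[of i j "[]"] by simp
  then have "RR n (pos [i, j]) (pos [j, i])" using RR_pos[OF n] comm by (simp add: vset_def)
  then show ?case by (simp add: pos_def)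
next
  case (braid i j)
  have "adj i j" using braid by (auto simp: adj_def)
  then have "peq [i, j, i] [j, i, j]" using br0[of i j "[]"] by simp
  then have "RR n (pos [i, j, i]) (pos [j, i, j])" using RR_pos[OF n] braid by (simp add: vset_def)
  then show ?case by (simp add: pos_def)
next
  case (refl w)
  then show ?case unfolding RR_def by simp
next
  case (sym u v)
  then show ?case unfolding RR_def using peq_sym by blast
next
  case (trans u v w)
  let ?q = "pw (QQ n)"
  have "peq (Phi n u @ ?q (length v) @ ?q (length w)) (Phi n v @ ?q (length u) @ ?q (length w))"
    using peq_appR[OF trans.IH(1)[unfolded RR_def], of "?q (length w)"] by simp
  also have "Phi n v @ ?q (length u) @ ?q (length w) = (Phi n v @ ?q (length w)) @ ?q (length u)"
    using pw_comm by simp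
  also have "peq ((Phi n v @ ?q (length w)) @ ?q (length u)) ((Phi n w @ ?q (length v)) @ ?q (length u))"
    using peq_appR[OF trans.IH(2)[unfolded RR_def]] .
  finally have "peq ((Phi n u @ ?q (length w)) @ ?q (length v)) ((Phi n w @ ?q (length u)) @ ?q (length v))"
    using pw_comm by (metis append.assoc)
  then show ?case unfolding RR_def by (rule cancelR)
next
  case (ctxt u v x y)
  let ?q = "pw (QQ n)"
  have e1: "?q (length (x @ v @ y)) = ?q (length v) @ ?q (length x + length y)"
  proof -
    have "length (x @ v @ y) = length v + (length x + length y)" by simp
    then show ?thesis by (simp only: pw_add)
  qed
  have e2: "?q (length (x @ u @ y)) = ?q (length u) @ ?q (length x + length y)"
  proof -
    have "length (x @ u @ y) = length u + (length x + length y)" by simp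
    then show ?thesis by (simp only: pw_add)
  qed
  have "Phi n (x @ u @ y) @ ?q (length (x @ v @ y)) = Phi n x @ Phi n u @ (Phi n y @ ?q (length v)) @ ?q (length x + length y)"
    using e1 by (simp add: Phi_app)
  also have "peq (Phi n x @ Phi n u @ (Phi n y @ ?q (length v)) @ ?q (length x + length y))
                 (Phi n x @ Phi n u @ (?q (length v) @ Phi n y) @ ?q (length x + length y))"
    using peq_appL[OF peq_appR[OF peq_sym[OF pwQ_central[OF n set_Phi]]], of "Phi n x @ Phi n u"] by simp
  also have "Phi n x @ Phi n u @ (?q (length v) @ Phi n y) @ ?q (length x + length y) = Phi n x @ (Phi n u @ ?q (length v)) @ Phi n y @ ?q (length x + length y)"
    by simp
  also have "peq (Phi n x @ (Phi n u @ ?q (length v)) @ Phi n y @ ?q (length x + length y))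
                 (Phi n x @ (Phi n v @ ?q (length u)) @ Phi n y @ ?q (length x + length y))"
    using ctxt.IH unfolding RR_def by (intro peq_appL peq_appR)
  also have "Phi n x @ (Phi n v @ ?q (length u)) @ Phi n y @ ?q (length x + length y) = Phi n x @ Phi n v @ (?q (length u) @ Phi n y) @ ?q (length x + length y)"
    by simp
  also have "peq (Phi n x @ Phi n v @ (?q (length u) @ Phi n y) @ ?q (length x + length y))
                 (Phi n x @ Phi n v @ (Phi n y @ ?q (length u)) @ ?q (length x + length y))"
    using peq_appL[OF peq_appR[OF pwQ_central[OF n set_Phi]], of "Phi n x @ Phi n v"] by simp
  also have "Phi n x @ Phi n v @ (Phi n y @ ?q (length u)) @ ?q (length x + length y) = Phi n (x @ v @ y) @ ?q (length (x @ u @ y))"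
    using e2 by (simp add: Phi_app)
  finally show ?case unfolding RR_def .
qed



lemma letter_comm: assumes n: "2 \<le> n" and i: "1 \<le> i" "i \<le> n - 1"
  shows "braid_eq n ([(i, b)] @ pos (pw (QQ n) l)) (pos (pw (QQ n) l) @ [(i, b)])"
proof -
  let ?W = "pw (QQ n) l"
  have sW: "set ?W \<subseteq> vset n" using set_pw[OF set_QQ] .
  have si: "set [i] \<subseteq> vset n" using i by (simp add: vset_def)
  have T: "braid_eq n ([(i, True)] @ pos ?W) (pos ?W @ [(i, True)])"
  proof -
    have "peq ([i] @ ?W) (?W @ [i])" using peq_sym[OF pwQ_central[OF n si]] .
    moreover have "set ([i] @ ?W) \<subseteq> vset n" using sW si by simp
    ultimately have "braid_eq n (pos ([i] @ ?W)) (pos (?W @ [i]))" by (rule peq_beq)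
    then show ?thesis by (simp add: pos_app pos_def)
  qed
  show ?thesis
  proof (cases b)
    case True then show ?thesis using T by simp
  next
    case False
    have c1: "braid_eq n [(i, True), (i, False)] []" using braid_eq.cancel[OF i, of True] by simp
    have c2: "braid_eq n [(i, False), (i, True)] []" using braid_eq.cancel[OF i, of False] by simp
    have "braid_eq n ([(i, False)] @ pos ?W) ([(i, False)] @ pos ?W @ [(i, True), (i, False)])"
      using beq_appL[OF beq_sym[OF c1], of "[(i, False)] @ pos ?W"] by simp
    also have "braid_eq n ([(i, False)] @ pos ?W @ [(i, True), (i, False)]) ([(i, False)] @ ([(i, True)] @ pos ?W) @ [(i, False)])"
      using beq_appL[OF beq_appR[OF beq_sym[OF T]], of "[(i, False)]" "[(i, False)]"] by simp
    also have "[(i, False)] @ ([(i, True)] @ pos ?W) @ [(i, False)] = [(i, False), (i, True)] @ pos ?W @ [(i, False)]" by simp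
    also have "braid_eq n ([(i, False), (i, True)] @ pos ?W @ [(i, False)]) ([] @ pos ?W @ [(i, False)])"
      using beq_appR[OF c2] .
    finally show ?thesis using False by simp
  qed
qed

lemma G3: assumes n: "2 \<le> n" shows "valid_word n X \<Longrightarrow> braid_eq n (pos (Phi n X)) (pos (pw (QQ n) (length X)) @ X)"
proof (induction X)
  case Nil then show ?case by (simp add: Phi_Nil pos_def beq_refl)
next
  case (Cons a X)
  obtain i b where a: "a = (i, b)" by (cases a)
  have v: "1 \<le> i" "i \<le> n - 1" "valid_word n X" using Cons.prems a by (auto simp: valid_Cons)
  have si: "set [i] \<subseteq> vset n" using v by (simp add: vset_def)
  have ph: "braid_eq n (pos (phi n a)) (pos (QQ n) @ [a])"
  proof (cases b)
    case True then show ?thesis using a v by (simp add: phi_def pos_app pos_def beq_refl)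
  next
    case False
    have c1: "braid_eq n [(i, True), (i, False)] []" using braid_eq.cancel[OF v(1,2), of True] by simp
    have "braid_eq n (pos (Dl n i)) (pos (Dl n i) @ [(i, True), (i, False)])"
      using beq_appL[OF beq_sym[OF c1], of "pos (Dl n i)"] by simp
    also have "pos (Dl n i) @ [(i, True), (i, False)] = pos (Dl n i @ [i]) @ [(i, False)]" by (simp add: pos_def)
    also have "braid_eq n (pos (Dl n i @ [i]) @ [(i, False)]) (pos (QQ n) @ [(i, False)])"
    proof -
      have "set (Dl n i @ [i]) \<subseteq> vset n" using set_Dl si by simp
      then show ?thesis using beq_appR[OF peq_beq[OF Dl_Q[OF n v(1,2)]]] by blast
    qed
    finally show ?thesis using a False v by (simp add: phi_def)
  qed
  let ?W = "pw (QQ n) (length X)"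
  have "pos (Phi n (a # X)) = pos (phi n a) @ pos (Phi n X)" by (simp add: Phi_Cons pos_app)
  also have "braid_eq n (pos (phi n a) @ pos (Phi n X)) ((pos (QQ n) @ [a]) @ (pos ?W @ X))"
    using beq_app[OF ph Cons.IH[OF v(3)]] .
  also have "(pos (QQ n) @ [a]) @ (pos ?W @ X) = pos (QQ n) @ ([a] @ pos ?W) @ X" by simp
  also have "braid_eq n (pos (QQ n) @ ([a] @ pos ?W) @ X) (pos (QQ n) @ (pos ?W @ [a]) @ X)"
    using beq_appL[OF beq_appR[OF letter_comm[OF n v(1,2)]]] a by simp
  also have "pos (QQ n) @ (pos ?W @ [a]) @ X = pos (pw (QQ n) (length (a # X))) @ (a # X)" by (simp add: pos_app)
  finally show ?case .
qed

lemma Phi_pw: "Phi n (concat (replicate k X)) = pw (Phi n X) k"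
  by (induction k) (simp_all add: Phi_Nil Phi_app)

lemma len_pw: "length (concat (replicate k X)) = k * length X"
  by (induction k) simp_all

lemma pw_mult: "pw x (k * m) = pw (pw x m) k"
  by (induction k) (simp_all add: pw_add)

lemma valid_pw: "set x \<subseteq> vset n \<Longrightarrow> valid_word n (pos x)" by (rule valid_pos)

lemma tf: assumes n: "2 \<le> n" and v: "valid_word n X" and k: "k \<ge> 1"
  and e: "braid_eq n (concat (replicate k X)) []" shows "braid_eq n X []"
proof -
  let ?W = "pw (QQ n) (length X)"
  have "RR n (concat (replicate k X)) []" using braid_RR[OF n e] .
  then have "peq (pw (Phi n X) k) (pw ?W k)" unfolding RR_def by (simp add: Phi_Nil Phi_pw len_pw pw_mult)
  moreover have "peq (?W @ Phi n X) (Phi n X @ ?W)" using pwQ_central[OF n set_Phi] .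
  ultimately have "peq (Phi n X) ?W" using torsion[OF k] by blast
  then have h: "braid_eq n (pos (Phi n X)) (pos ?W)" using peq_beq[OF _ set_Phi] by blast
  have "braid_eq n (pos ?W @ X) (pos ?W)" using beq_trans[OF beq_sym[OF G3[OF n v]] h] .
  then have "braid_eq n (pos ?W @ X) (pos ?W @ [])" by simp
  moreover have "valid_word n (pos ?W)" using valid_pos set_pw[OF set_QQ] by blast
  ultimately show ?thesis using beq_cancelL by blast
qed



definition swp :: "(nat \<Rightarrow> bool) \<Rightarrow> nat \<Rightarrow> (nat \<Rightarrow> bool)" where
  "swp s j = s(j := s (Suc j), Suc j := s j)"

fun st :: "(nat \<Rightarrow> bool) \<Rightarrow> bword \<Rightarrow> (nat \<Rightarrow> bool)" where
  "st s [] = s"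
| "st s ((j, b) # w) = st (swp s j) w"

fun cnt :: "(nat \<Rightarrow> bool) \<Rightarrow> bword \<Rightarrow> int" where
  "cnt s [] = 0"
| "cnt s ((j, b) # w) = (if s j \<noteq> s (Suc j) then (if b then 1 else -1) else 0) + cnt (swp s j) w"

lemma st_app: "st s (u @ v) = st (st s u) v"
  by (induction s u rule: st.induct) auto

lemma cnt_app: "cnt s (u @ v) = cnt s u + cnt (st s u) v"
  by (induction s u rule: cnt.induct) auto

lemma inv_cnt: "braid_eq n u v \<Longrightarrow> \<forall>s. st s u = st s v \<and> cnt s u = cnt s v"
proof (induction rule: braid_eq.induct)
  case (cancel i b)
  show ?case by (auto simp: swp_def fun_eq_iff)
next
  case (comm i j)
  then show ?case by (auto simp: swp_def fun_eq_iff)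
next
  case (braid i j)
  then have "j = Suc i \<or> i = Suc j" by auto
  then show ?case by (auto simp: swp_def fun_eq_iff)
next
  case (refl w) then show ?case by simp
next
  case (sym u v) then show ?case by simp
next
  case (trans u v w) then show ?case by simp
next
  case (ctxt u v x y) then show ?case by (simp add: st_app cnt_app)
qed

lemma gap_cnt: "\<forall>a\<in>set w. fst a \<noteq> g \<Longrightarrow> st (\<lambda>p. p \<le> g) w = (\<lambda>p. p \<le> g) \<and> cnt (\<lambda>p. p \<le> g) w = 0"
proof (induction w)
  case Nil then show ?case by simp
next
  case (Cons a w)
  obtain j b where a: "a = (j, b)" by (cases a)
  have "j \<noteq> g" using Cons.prems a by auto
  then have "swp (\<lambda>p. p \<le> g) j = (\<lambda>p. p \<le> g)" by (auto simp: swp_def fun_eq_iff)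
  moreover have "(j \<le> g) = (Suc j \<le> g)" using \<open>j \<noteq> g\<close> by auto
  ultimately show ?case using Cons a by simp
qed

lemma pos_cnt: "\<forall>a\<in>set w. snd a \<Longrightarrow> cnt s w \<ge> 0"
  by (induction s w rule: cnt.induct) auto

lemma neg_cnt: "\<forall>a\<in>set w. \<not> snd a \<Longrightarrow> cnt s w \<le> 0"
  by (induction s w rule: cnt.induct) auto

lemma pos_cnt1: assumes "\<forall>a\<in>set w. snd a" "(g, True) \<in> set w" shows "cnt (\<lambda>p. p \<le> g) w \<ge> 1"
proof -
  have "\<exists>x\<in>set w. fst x = g" using assms(2) by force
  then obtain ys x zs where d: "w = ys @ x # zs" "fst x = g" "\<forall>y\<in>set ys. \<not> fst y = g"
    using split_list_first_prop[of w "\<lambda>x. fst x = g"] by blast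
  have x: "x = (g, True)" using d assms(1) by (cases x) auto
  have z: "cnt (swp (\<lambda>p. p \<le> g) g) zs \<ge> 0" using pos_cnt assms(1) d by auto
  have "cnt (\<lambda>p. p \<le> g) w = cnt (\<lambda>p. p \<le> g) ys + cnt (st (\<lambda>p. p \<le> g) ys) (x # zs)" using d cnt_app by simp
  also have "... = cnt (\<lambda>p. p \<le> g) (x # zs)" using gap_cnt[of ys g] d by simp
  also have "... = 1 + cnt (swp (\<lambda>p. p \<le> g) g) zs" using x by simp
  finally show ?thesis using z by simp
qed

lemma neg_cnt1: assumes "\<forall>a\<in>set w. \<not> snd a" "(g, False) \<in> set w" shows "cnt (\<lambda>p. p \<le> g) w \<le> -1"
proof -
  have "\<exists>x\<in>set w. fst x = g" using assms(2) by force
  then obtain ys x zs where d: "w = ys @ x # zs" "fst x = g" "\<forall>y\<in>set ys. \<not> fst y = g"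
    using split_list_first_prop[of w "\<lambda>x. fst x = g"] by blast
  have x: "x = (g, False)" using d assms(1) by (cases x) auto
  have z: "cnt (swp (\<lambda>p. p \<le> g) g) zs \<le> 0" using neg_cnt assms(1) d by auto
  have "cnt (\<lambda>p. p \<le> g) w = cnt (\<lambda>p. p \<le> g) ys + cnt (st (\<lambda>p. p \<le> g) ys) (x # zs)" using d cnt_app by simp
  also have "... = cnt (\<lambda>p. p \<le> g) (x # zs)" using gap_cnt[of ys g] d by simp
  also have "... = -1 + cnt (swp (\<lambda>p. p \<le> g) g) zs" using x by simp
  finally show ?thesis using z by simp
qed

lemma set_inv_word: "set (inv_word w) = (\<lambda>(i, b). (i, \<not> b)) ` set w"
  unfolding inv_word_def by auto

lemma delta_pos: "\<forall>a\<in>set (Delta_word n). snd a" unfolding Delta_word_def by auto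
lemma delta_has: "1 \<le> g \<Longrightarrow> g \<le> n - 1 \<Longrightarrow> (g, True) \<in> set (Delta_word n)"
  unfolding Delta_word_def by force

lemma set_pwr: "set (concat (replicate r D)) \<subseteq> set D" by (induction r) auto

lemma inv_neg: "\<forall>a\<in>set D. snd a \<Longrightarrow> \<forall>a\<in>set (inv_word D). \<not> snd a"
  unfolding set_inv_word by auto

lemma inv_has: "(g, True) \<in> set D \<Longrightarrow> (g, False) \<in> set (inv_word D)"
  unfolding set_inv_word by force

lemma word_pow_gap: "\<forall>a\<in>set X. fst a \<noteq> g \<Longrightarrow> \<forall>a\<in>set (word_pow X k). fst a \<noteq> g"
  by (auto simp: word_pow_def set_inv_word)

lemma exists_gap: assumes "n \<ge> 2" "length X < n - 1"
  shows "\<exists>g. 1 \<le> g \<and> g \<le> n - 1 \<and> (\<forall>a\<in>set X. fst a \<noteq> g)"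
proof (rule ccontr)
  assume "\<not> ?thesis"
  then have "{1..n - 1} \<subseteq> fst ` set X" by force
  then have "card {1..n - 1} \<le> card (fst ` set X)" by (intro card_mono) auto
  also have "... \<le> card (set X)" by (rule card_image_le) simp
  also have "... \<le> length X" by (rule card_length)
  finally show False using assms by simp
qed

theorem lemma18:
  fixes n :: nat and X :: bword
  assumes "n \<ge> 2"
    and "valid_word n X"
    and "periodic_braid n X"
    and "\<not> braid_eq n X []"
  shows "length X \<ge> n - 1"
proof (rule ccontr)
  assume "\<not> length X \<ge> n - 1"
  then have "length X < n - 1" by simp
  then obtain g where g: "1 \<le> g" "g \<le> n - 1" "\<forall>a\<in>set X. fst a \<noteq> g" using exists_gap assms(1) by blast
  obtain k m where km: "k \<noteq> 0" "braid_eq n (word_pow X k) (word_pow (Delta_word n) (2 * m))"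
    using assms(3) unfolding periodic_braid_def by blast
  let ?s = "\<lambda>p. p \<le> g"
  have c0: "cnt ?s (word_pow X k) = 0" using gap_cnt[OF word_pow_gap[OF g(3)]] by (rule conjunct2)
  have ceq: "cnt ?s (word_pow X k) = cnt ?s (word_pow (Delta_word n) (2 * m))" using inv_cnt[OF km(2)] by simp
  have m0: "m = 0"
  proof (rule ccontr)
    assume "m \<noteq> 0"
    show False
    proof (cases "m > 0")
      case True
      then have "nat (2 * m) > 0" by simp
      then obtain r where r: "nat (2 * m) = Suc r" using gr0_implies_Suc by blast
      have w: "word_pow (Delta_word n) (2 * m) = Delta_word n @ concat (replicate r (Delta_word n))"
        using True r unfolding word_pow_def by simp
      have "\<forall>a\<in>set (word_pow (Delta_word n) (2 * m)). snd a" unfolding w using delta_pos[of n] set_pwr[of r "Delta_word n"] by (simp only: set_append) blast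
      moreover have "(g, True) \<in> set (word_pow (Delta_word n) (2 * m))" using w delta_has[OF g(1,2)] by simp
      ultimately have "cnt ?s (word_pow (Delta_word n) (2 * m)) \<ge> 1" by (rule pos_cnt1)
      then show False using c0 ceq by simp
    next
      case False
      then have mn: "m < 0" using \<open>m \<noteq> 0\<close> by simp
      then have "nat (- (2 * m)) > 0" by simp
      then obtain r where r: "nat (- (2 * m)) = Suc r" using gr0_implies_Suc by blast
      have w: "word_pow (Delta_word n) (2 * m) = inv_word (Delta_word n) @ concat (replicate r (inv_word (Delta_word n)))"
        using mn r unfolding word_pow_def by simp
      have "\<forall>a\<in>set (word_pow (Delta_word n) (2 * m)). \<not> snd a" unfolding w using inv_neg[OF delta_pos[of n]] set_pwr[of r "inv_word (Delta_word n)"] by (simp only: set_append) blast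
      moreover have "(g, False) \<in> set (word_pow (Delta_word n) (2 * m))" unfolding w using inv_has[OF delta_has[OF g(1,2)]] by simp
      ultimately have "cnt ?s (word_pow (Delta_word n) (2 * m)) \<le> -1" by (rule neg_cnt1)
      then show False using c0 ceq by simp
    qed
  qed
  have e: "braid_eq n (word_pow X k) []" using km(2) m0 by (simp add: word_pow_def)
  show False
  proof (cases "k > 0")
    case True
    then have "braid_eq n (concat (replicate (nat k) X)) []" using e by (simp add: word_pow_def)
    moreover have "nat k \<ge> 1" using True by simp
    ultimately have "braid_eq n X []" using tf[OF assms(1,2)] by blast
    then show False using assms(4) by simp
  next
    case False
    then have "k < 0" using km(1) by simp
    then have "braid_eq n (concat (replicate (nat (- k)) (inv_word X))) []" using e by (simp add: word_pow_def)
    moreover have "nat (- k) \<ge> 1" using \<open>k < 0\<close> by simp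
    moreover have vi: "valid_word n (inv_word X)" using assms(2) unfolding valid_word_def set_inv_word by auto
    ultimately have hi: "braid_eq n (inv_word X) []" using tf[OF assms(1) vi] by blast
    have "braid_eq n (X @ []) (X @ inv_word X)" using beq_appL[OF beq_sym[OF hi]] .
    also have "braid_eq n (X @ inv_word X) []" by (rule inv_right[OF assms(2)])
    finally show False using assms(4) by simp
  qed
qed


end
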